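(* Let $G$ be a finite soluble group and $N$ a minimal normal subgroup of $G$. If $t\in G$ is an involution, then $\mathrm d(t,N)\le 1$ in $\Gamma(G)$. Moreover, if $x\in G\setminus\{1\}$ satisfies $\mathrm d(x,N)>3$ and $y\in\langle x\rangle$ has prime order, then both $C_G(y)$ and $x$ have odd order.
   Context: For a group $G$, the normalising graph $\Gamma(G)$ has vertex set $G\setminus\{1\}$, and two distinct vertices $x,y$ are adjacent if and only if $\langle x\rangle$ normalises $\langle y\rangle$ or $\langle y\rangle$ normalises $\langle x\rangle$. $\mathrm d$ is graph distance (infinite if there is no path), and $\mathrm d(x,N)=\min\{\mathrm d(x,n):n\in N\setminus\{1\}\}$, which is $0$ if $x\in N$. *)

theory Defs
  imports "HOL-Algebra.Algebra" "HOL-Library.Extended_Nat"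
begin

definition cyc :: "('a, 'b) monoid_scheme \<Rightarrow> 'a \<Rightarrow> 'a set" where
  "cyc G x = generate G {x}"

definition ng_adj :: "('a, 'b) monoid_scheme \<Rightarrow> 'a \<Rightarrow> 'a \<Rightarrow> bool" where
  "ng_adj G x y \<longleftrightarrow>
     x \<in> carrier G - {\<one>\<^bsub>G\<^esub>} \<and> y \<in> carrier G - {\<one>\<^bsub>G\<^esub>} \<and> x \<noteq> y \<and>
     (cyc G x \<subseteq> normalizer G (cyc G y) \<or> cyc G y \<subseteq> normalizer G (cyc G x))"

definition ng_walk :: "('a, 'b) monoid_scheme \<Rightarrow> nat \<Rightarrow> 'a \<Rightarrow> 'a \<Rightarrow> bool" where
  "ng_walk G n x y \<longleftrightarrow>
     (\<exists>p :: nat \<Rightarrow> 'a. p 0 = x \<and> p n = y \<and> (\<forall>i\<le>n. p i \<in> carrier G - {\<one>\<^bsub>G\<^esub>}) \<and>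
        (\<forall>i<n. ng_adj G (p i) (p (Suc i))))"

text \<open>Graph distance (infinite if there is no path).\<close>
definition ng_dist :: "('a, 'b) monoid_scheme \<Rightarrow> 'a \<Rightarrow> 'a \<Rightarrow> enat" where
  "ng_dist G x y = (INF n \<in> {n. ng_walk G n x y}. enat n)"

definition ng_dist_set :: "('a, 'b) monoid_scheme \<Rightarrow> 'a \<Rightarrow> 'a set \<Rightarrow> enat" where
  "ng_dist_set G x N = (INF n \<in> N - {\<one>\<^bsub>G\<^esub>}. ng_dist G x n)"

definition minimal_normal :: "'a set \<Rightarrow> ('a, 'b) monoid_scheme \<Rightarrow> bool" where
  "minimal_normal N G \<longleftrightarrow> N \<lhd> G \<and> N \<noteq> {\<one>\<^bsub>G\<^esub>} \<and>
     (\<forall>M. M \<lhd> G \<and> M \<subseteq> N \<longrightarrow> M = {\<one>\<^bsub>G\<^esub>} \<or> M = N)"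

definition centralizer :: "('a, 'b) monoid_scheme \<Rightarrow> 'a \<Rightarrow> 'a set" where
  "centralizer G y = {g \<in> carrier G. g \<otimes>\<^bsub>G\<^esub> y = y \<otimes>\<^bsub>G\<^esub> g}"

end

theory Submission imports Defs begin

lemma (in group) conj_image:
  assumes "x \<in> carrier G" "H \<subseteq> carrier G"
  shows "x <# H #> inv x = (\<lambda>h. x \<otimes> h \<otimes> inv x) ` H"
  unfolding l_coset_def r_coset_def by auto

lemma (in group) conj_hom:
  assumes x: "x \<in> carrier G"
  shows "group_hom G G (\<lambda>h. x \<otimes> h \<otimes> inv x)"
proof -
  have "(\<lambda>h. x \<otimes> h \<otimes> inv x) \<in> hom G G"
  proof (rule homI)
    fix a b assume a: "a \<in> carrier G" and b: "b \<in> carrier G"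
    show "x \<otimes> (a \<otimes> b) \<otimes> inv x = x \<otimes> a \<otimes> inv x \<otimes> (x \<otimes> b \<otimes> inv x)"
    proof -
      have aux: "inv x \<otimes> (x \<otimes> c) = c" if "c \<in> carrier G" for c
        using that x by (simp add: m_assoc[symmetric])
      show ?thesis using a b x aux by (simp add: m_assoc)
    qed
  qed (use x in simp)
  then show ?thesis using is_group by (simp add: group_hom_def group_hom_axioms_def)
qed

lemma (in group) cyc_inv: "y \<in> carrier G \<Longrightarrow> cyc G (inv y) = cyc G y"
proof -
  assume y: "y \<in> carrier G"
  have s: "subgroup (cyc G z) G" if "z \<in> carrier G" for z
    unfolding cyc_def using generate_is_subgroup that by auto
  have "inv y \<in> cyc G y" unfolding cyc_def
    using y generate.incl[of y "{y}" G] generate_m_inv_closed[of "{y}" y] by auto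
  hence 1: "cyc G (inv y) \<subseteq> cyc G y" unfolding cyc_def
    using generate_subgroup_incl[of "{inv y}" "generate G {y}"] s[OF y] by (auto simp: cyc_def)
  have "y \<in> cyc G (inv y)" unfolding cyc_def
    using y generate.incl[of "inv y" "{inv y}" G] generate_m_inv_closed[of "{inv y}" "inv y"] by auto
  hence 2: "cyc G y \<subseteq> cyc G (inv y)" unfolding cyc_def
    using generate_subgroup_incl[of "{y}" "generate G {inv y}"] s[of "inv y"] y by (auto simp: cyc_def)
  from 1 2 show ?thesis by blast
qed

lemma (in group) cyc_in_normalizer:
  assumes x: "x \<in> carrier G" and y: "y \<in> carrier G"
    and c: "x \<otimes> y \<otimes> inv x = y \<or> x \<otimes> y \<otimes> inv x = inv y"
  shows "cyc G x \<subseteq> normalizer G (cyc G y)"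
proof -
  interpret h: group_hom G G "\<lambda>h. x \<otimes> h \<otimes> inv x" using conj_hom[OF x] .
  have sub: "cyc G y \<subseteq> carrier G" unfolding cyc_def using generate_incl y by auto
  have e1: "x <# cyc G y #> inv x = (\<lambda>h. x \<otimes> h \<otimes> inv x) ` generate G {y}"
    using conj_image[OF x sub] unfolding cyc_def .
  have e2: "(\<lambda>h. x \<otimes> h \<otimes> inv x) ` generate G {y} = generate G ((\<lambda>h. x \<otimes> h \<otimes> inv x) ` {y})"
    using h.generate_img[of "{y}"] y by simp
  have e3: "generate G ((\<lambda>h. x \<otimes> h \<otimes> inv x) ` {y}) = cyc G y"
  proof (cases "x \<otimes> y \<otimes> inv x = y")
    case True thus ?thesis unfolding cyc_def by simp
  next
    case False
    hence "x \<otimes> y \<otimes> inv x = inv y" using c by blast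
    thus ?thesis using cyc_inv[OF y] unfolding cyc_def by simp
  qed
  have eq: "x <# cyc G y #> inv x = cyc G y" using e1 e2 e3 by simp
  have "x \<in> normalizer G (cyc G y)"
    unfolding normalizer_def stabilizer_def using x sub eq by simp
  moreover have "subgroup (normalizer G (cyc G y)) G"
    using normalizer_imp_subgroup sub by simp
  ultimately have "generate G {x} \<subseteq> normalizer G (cyc G y)"
    using generate_subgroup_incl[of "{x}"] by blast
  thus ?thesis unfolding cyc_def .
qed

lemma (in group) adj_intro:
  assumes "x \<in> carrier G" "y \<in> carrier G" "x \<noteq> \<one>" "y \<noteq> \<one>" "x \<noteq> y"
    "x \<otimes> y \<otimes> inv x = y \<or> x \<otimes> y \<otimes> inv x = inv y"
  shows "ng_adj G x y"
  using cyc_in_normalizer[OF assms(1,2,6)] assms unfolding ng_adj_def by auto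

lemma ng_walk0: "x \<in> carrier G - {\<one>\<^bsub>G\<^esub>} \<Longrightarrow> ng_walk G 0 x x"
  unfolding ng_walk_def by (rule exI[of _ "\<lambda>_. x"]) auto

lemma ng_walk1: "ng_adj G x y \<Longrightarrow> ng_walk G 1 x y"
  unfolding ng_walk_def
  by (rule exI[of _ "\<lambda>i. if i = 0 then x else y"]) (auto simp: ng_adj_def le_Suc_eq)

lemma ng_walk_cat:
  assumes "ng_walk G a x y" "ng_walk G b y z"
  shows "ng_walk G (a + b) x z"
proof -
  obtain p where p: "p 0 = x" "p a = y" "\<forall>i\<le>a. p i \<in> carrier G - {\<one>\<^bsub>G\<^esub>}"
    "\<forall>i<a. ng_adj G (p i) (p (Suc i))" using assms(1) unfolding ng_walk_def by blast
  obtain q where q: "q 0 = y" "q b = z" "\<forall>i\<le>b. q i \<in> carrier G - {\<one>\<^bsub>G\<^esub>}"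
    "\<forall>i<b. ng_adj G (q i) (q (Suc i))" using assms(2) unfolding ng_walk_def by blast
  define r where "r i = (if i \<le> a then p i else q (i - a))" for i
  have "r 0 = x" using p by (simp add: r_def)
  moreover have "r (a + b) = z" using p q by (cases "b = 0") (auto simp: r_def)
  moreover have "\<forall>i\<le>a+b. r i \<in> carrier G - {\<one>\<^bsub>G\<^esub>}"
    using p(3) q(3) by (auto simp: r_def)
  moreover have "\<forall>i<a+b. ng_adj G (r i) (r (Suc i))"
  proof (intro allI impI)
    fix i assume i: "i < a + b"
    show "ng_adj G (r i) (r (Suc i))"
    proof (cases "i < a")
      case True thus ?thesis using p(4) by (auto simp: r_def)
    next
      case False
      hence "Suc i - a = Suc (i - a)" by simp
      thus ?thesis using False q(4) i p(2) q(1)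
        by (auto simp: r_def)
    qed
  qed
  ultimately show ?thesis unfolding ng_walk_def by blast
qed

lemma ng_dist_set_le:
  assumes "ng_walk G k x n" "n \<in> N" "n \<noteq> \<one>\<^bsub>G\<^esub>"
  shows "ng_dist_set G x N \<le> enat k"
proof -
  have "ng_dist G x n \<le> enat k" unfolding ng_dist_def
    using assms(1) by (intro INF_lower2[of k]) auto
  thus ?thesis unfolding ng_dist_set_def using assms(2,3) by (intro INF_lower2[of n]) auto
qed

lemma (in group) minimal_normal_abelian:
  assumes sol: "solvable G" and mn: "minimal_normal N G"
    and a: "a \<in> N" and b: "b \<in> N"
  shows "a \<otimes> b = b \<otimes> a"
proof -
  have nN: "N \<lhd> G" and ne: "N \<noteq> {\<one>}"
    and mi: "\<And>M. M \<lhd> G \<Longrightarrow> M \<subseteq> N \<Longrightarrow> M = {\<one>} \<or> M = N"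
    using mn unfolding minimal_normal_def by auto
  have sN: "subgroup N G" using nN normal_imp_subgroup by blast
  have dn: "derived G N \<lhd> G" using derived_is_normal[OF nN] .
  have ds: "derived G N \<subseteq> N" using derived_incl[OF subset_refl sN] .
  have "derived G N \<noteq> N"
  proof
    assume eq: "derived G N = N"
    have "(derived G ^^ n) N = N" for n by (induct n) (simp_all add: eq)
    moreover obtain n where "(derived G ^^ n) N = {\<one>}"
      using solvable_imp_trivial_derived_seq[OF solvable_subgroup[OF sN sol]] by blast
    ultimately show False using ne by simp
  qed
  hence d1: "derived G N = {\<one>}" using mi[OF dn ds] by blast
  have ac: "a \<in> carrier G" "b \<in> carrier G" using a b subgroup.mem_carrier[OF sN] by auto
  have "a \<otimes> b \<otimes> inv a \<otimes> inv b \<in> derived G N"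
    unfolding derived_def using a b by (intro generate.incl) blast
  hence c: "a \<otimes> b \<otimes> inv a \<otimes> inv b = \<one>" using d1 by simp
  have "a \<otimes> b = a \<otimes> b \<otimes> inv a \<otimes> inv b \<otimes> b \<otimes> a"
    using ac by (simp add: m_assoc)
  also have "\<dots> = b \<otimes> a" using c ac by simp
  finally show ?thesis .
qed

lemma (in group) ord_2I:
  assumes "t \<in> carrier G" "t \<noteq> \<one>" "t \<otimes> t = \<one>"
  shows "ord t = 2"
proof -
  have "t [^] (2::nat) = \<one>" using assms by (simp add: numeral_2_eq_2)
  hence "ord t dvd 2" using pow_eq_id assms(1) by blast
  moreover have "ord t \<noteq> 1" using ord_eq_1 assms by blast
  moreover have "ord t \<le> 2" using \<open>ord t dvd 2\<close> by (simp add: dvd_imp_le)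
  moreover have "ord t \<noteq> 0" using \<open>ord t dvd 2\<close> by (metis dvd_0_left zero_neq_numeral)
  ultimately show ?thesis by linarith
qed

lemma (in group) ord_2D:
  assumes "t \<in> carrier G" "ord t = 2"
  shows "t \<noteq> \<one>" "t \<otimes> t = \<one>"
proof -
  show "t \<noteq> \<one>" using assms ord_eq_1 by auto
  have "t [^] (2::nat) = \<one>" using assms pow_ord_eq_1 by metis
  thus "t \<otimes> t = \<one>" using assms by (simp add: numeral_2_eq_2)
qed

lemma (in group) even_subgroup_involution:
  assumes H: "subgroup H G" and fin: "finite H" and ev: "even (card H)"
  shows "\<exists>t\<in>H. ord t = 2"
proof -
  let ?K = "G\<lparr>carrier := H\<rparr>"
  have gK: "group ?K" using subgroup_imp_group[OF H] .
  have "order ?K = 2 ^ 1 * (card H div 2)" using ev by (simp add: order_def)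
  then obtain K where K: "subgroup K ?K" "card K = 2 ^ 1"
    using sylow_thm[of 2 ?K 1 "card H div 2"] gK fin by auto
  have KH: "K \<subseteq> H" using subgroup.subset[OF K(1)] by simp
  have one: "\<one> \<in> K" using subgroup.one_closed[OF K(1)] by simp
  have mc: "\<And>u v. u \<in> K \<Longrightarrow> v \<in> K \<Longrightarrow> u \<otimes> v \<in> K"
    using subgroup.m_closed[OF K(1)] by simp
  have "card K = 2" using K(2) by simp
  then obtain u v where uv: "K = {u, v}" "u \<noteq> v" using card_2_iff[of K] by blast
  then obtain t where t: "t \<in> K" "t \<noteq> \<one>" "K = {\<one>, t}" using one by auto
  have tc: "t \<in> carrier G" using t KH subgroup.mem_carrier[OF H] by blast
  have "t \<otimes> t \<in> K" using mc t by blast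
  moreover have "t \<otimes> t \<noteq> t"
  proof
    assume "t \<otimes> t = t"
    hence "t \<otimes> t = t \<otimes> \<one>" using tc by simp
    hence "t = \<one>" using tc l_cancel by blast
    thus False using t by blast
  qed
  ultimately have "t \<otimes> t = \<one>" using t(3) by blast
  thus ?thesis using ord_2I tc t KH by blast
qed

lemma (in group) centralizer_subgroup:
  assumes y: "y \<in> carrier G"
  shows "subgroup (centralizer G y) G"
proof (rule subgroupI)
  show "centralizer G y \<subseteq> carrier G" unfolding centralizer_def by auto
  show "centralizer G y \<noteq> {}" unfolding centralizer_def using y by auto
next
  fix g assume "g \<in> centralizer G y"
  hence g: "g \<in> carrier G" "g \<otimes> y = y \<otimes> g" unfolding centralizer_def by auto
  have "inv g \<otimes> y = inv g \<otimes> (y \<otimes> g) \<otimes> inv g" using g(1) y by (simp add: m_assoc)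
  also have "\<dots> = inv g \<otimes> (g \<otimes> y) \<otimes> inv g" using g(2) by simp
  also have "\<dots> = y \<otimes> inv g" using g(1) y by (simp add: m_assoc[symmetric])
  finally show "inv g \<in> centralizer G y" unfolding centralizer_def using g by simp
next
  fix g h assume "g \<in> centralizer G y" "h \<in> centralizer G y"
  hence g: "g \<in> carrier G" "g \<otimes> y = y \<otimes> g" and h: "h \<in> carrier G" "h \<otimes> y = y \<otimes> h"
    unfolding centralizer_def by auto
  have "g \<otimes> h \<otimes> y = g \<otimes> (h \<otimes> y)" using g(1) h(1) y by (simp add: m_assoc)
  also have "\<dots> = g \<otimes> (y \<otimes> h)" using h(2) by simp
  also have "\<dots> = g \<otimes> y \<otimes> h" using g(1) h(1) y by (simp add: m_assoc)
  also have "\<dots> = y \<otimes> g \<otimes> h" using g(2) by simp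
  also have "\<dots> = y \<otimes> (g \<otimes> h)" using g(1) h(1) y by (simp add: m_assoc)
  finally show "g \<otimes> h \<in> centralizer G y" unfolding centralizer_def using g h by simp
qed

lemma (in group) cyc_commute:
  assumes x: "x \<in> carrier G" and y: "y \<in> cyc G x"
  shows "y \<in> carrier G \<and> x \<otimes> y = y \<otimes> x"
proof -
  have "y \<in> centralizer G x"
  proof -
    have "x \<in> centralizer G x" unfolding centralizer_def using x by simp
    hence "generate G {x} \<subseteq> centralizer G x"
      using generate_subgroup_incl[OF _ centralizer_subgroup[OF x]] by blast
    thus ?thesis using y unfolding cyc_def by blast
  qed
  thus ?thesis unfolding centralizer_def by auto
qed

lemma (in group) commute_walk:
  assumes "x \<in> carrier G" "z \<in> carrier G" "x \<noteq> \<one>" "z \<noteq> \<one>" "x \<otimes> z = z \<otimes> x"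
  shows "\<exists>k\<le>1. ng_walk G k x z"
proof (cases "x = z")
  case True
  have "ng_walk G 0 x x" using ng_walk0[of x G] assms(1,3) by simp
  thus ?thesis using True by (intro exI[of _ 0]) simp
next
  case False
  have "x \<otimes> z \<otimes> inv x = z \<otimes> x \<otimes> inv x" using assms(5) by simp
  also have "\<dots> = z" using assms(1,2) by (simp add: m_assoc)
  finally have "x \<otimes> z \<otimes> inv x = z" .
  hence "ng_adj G x z" using adj_intro[OF assms(1-4) False] by blast
  hence "ng_walk G 1 x z" by (rule ng_walk1)
  thus ?thesis by (intro exI[of _ 1]) simp
qed

lemma (in group) involution_near_N:
  assumes sol: "solvable G" and mn: "minimal_normal N G"
    and tc: "t \<in> carrier G" and o2: "ord t = 2"
  shows "\<exists>n\<in>N. n \<noteq> \<one> \<and> (\<exists>k\<le>1. ng_walk G k t n)"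
proof -
  have t1: "t \<noteq> \<one>" and tt: "t \<otimes> t = \<one>" using ord_2D[OF tc o2] by auto
  have it: "inv t = t" using inv_equality[OF tt tc tc] .
  have ttz: "t \<otimes> (t \<otimes> z) = z" if "z \<in> carrier G" for z
    using that tc tt by (simp add: m_assoc[symmetric])
  have nN: "N \<lhd> G" and ne: "N \<noteq> {\<one>}" using mn unfolding minimal_normal_def by auto
  have sN: "subgroup N G" using nN normal_imp_subgroup by blast
  show ?thesis
  proof (cases "t \<in> N")
    case True
    have "ng_walk G 0 t t" using ng_walk0[of t G] t1 tc by simp
    thus ?thesis using True t1 by (intro bexI[of _ t] conjI exI[of _ 0]) auto
  next
    case tN: False
    obtain n0 where n0: "n0 \<in> N" "n0 \<noteq> \<one>" using ne subgroup.one_closed[OF sN] by blast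
    have n0c: "n0 \<in> carrier G" using n0 subgroup.mem_carrier[OF sN] by blast
    define c where "c = t \<otimes> n0 \<otimes> inv t"
    have cN: "c \<in> N" unfolding c_def using normal.inv_op_closed2[OF nN tc n0(1)] .
    have cc: "c \<in> carrier G" using cN subgroup.mem_carrier[OF sN] by blast
    have ab: "n0 \<otimes> c = c \<otimes> n0" using minimal_normal_abelian[OF sol mn n0(1) cN] .
    define m where "m = n0 \<otimes> c"
    have mN: "m \<in> N" unfolding m_def using subgroup.m_closed[OF sN n0(1) cN] .
    have mc: "m \<in> carrier G" using mN subgroup.mem_carrier[OF sN] by blast
    show ?thesis
    proof (cases "m = \<one>")
      case False
      have "t \<otimes> m \<otimes> inv t = c \<otimes> n0"
        unfolding m_def c_def it using tc n0c ttz tt by (simp add: m_assoc)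
      hence "t \<otimes> m \<otimes> inv t = m" using ab m_def by simp
      moreover have "t \<noteq> m" using tN mN by blast
      ultimately have "ng_adj G t m" using adj_intro[OF tc mc t1 False] by blast
      hence "ng_walk G 1 t m" by (rule ng_walk1)
      thus ?thesis using mN False by (intro bexI[of _ m] conjI exI[of _ 1]) auto
    next
      case True
      hence "c \<otimes> n0 = \<one>" using ab m_def by simp
      hence "inv n0 = c" using inv_equality n0c cc by blast
      hence "t \<otimes> n0 \<otimes> inv t = inv n0" unfolding c_def by simp
      moreover have "t \<noteq> n0" using tN n0 by blast
      ultimately have "ng_adj G t n0" using adj_intro[OF tc n0c t1 n0(2)] by blast
      hence "ng_walk G 1 t n0" by (rule ng_walk1)
      thus ?thesis using n0 by (intro bexI[of _ n0] conjI exI[of _ 1]) auto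
    qed
  qed
qed

theorem mainTheorem7:
  fixes G (structure) and N :: "'a set"
  assumes "group G" and "finite (carrier G)" and "solvable G"
    and "minimal_normal N G"
  shows "(\<forall>t \<in> carrier G. group.ord G t = 2 \<longrightarrow> ng_dist_set G t N \<le> 1)
    \<and> (\<forall>x \<in> carrier G - {\<one>}. \<forall>y \<in> cyc G x.
         ng_dist_set G x N > 3 \<and> Factorial_Ring.prime (group.ord G y) \<longrightarrow>
           odd (card (centralizer G y)) \<and> odd (group.ord G x))"
proof -
  interpret group G by fact
  have fin: "finite (carrier G)" by fact
  have inv_near: "\<exists>n\<in>N. n \<noteq> \<one> \<and> (\<exists>k\<le>1. ng_walk G k t n)"
    if "t \<in> carrier G" "ord t = 2" for t
    using involution_near_N[OF assms(3,4) that] .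
  have P1: "\<forall>t \<in> carrier G. ord t = 2 \<longrightarrow> ng_dist_set G t N \<le> 1"
  proof (intro ballI impI)
    fix t assume "t \<in> carrier G" "ord t = 2"
    then obtain n k where "n \<in> N" "n \<noteq> \<one>" "k \<le> 1" "ng_walk G k t n"
      using inv_near by blast
    hence "ng_dist_set G t N \<le> enat k" using ng_dist_set_le by metis
    also have "\<dots> \<le> 1" using \<open>k \<le> 1\<close> by (simp add: one_enat_def)
    finally show "ng_dist_set G t N \<le> 1" .
  qed
  have P2: "\<forall>x \<in> carrier G - {\<one>}. \<forall>y \<in> cyc G x.
         ng_dist_set G x N > 3 \<and> Factorial_Ring.prime (ord y) \<longrightarrow>
           odd (card (centralizer G y)) \<and> odd (ord x)"
  proof (intro ballI impI)
    fix x y assume x: "x \<in> carrier G - {\<one>}" and y: "y \<in> cyc G x"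
      and h: "ng_dist_set G x N > 3 \<and> Factorial_Ring.prime (ord y)"
    have xc: "x \<in> carrier G" and x1: "x \<noteq> \<one>" using x by auto
    have yc: "y \<in> carrier G" and xy: "x \<otimes> y = y \<otimes> x" using cyc_commute[OF xc y] by auto
    have y1: "y \<noteq> \<one>" using h by auto
    have far: "k > 3" if "n \<in> N" "n \<noteq> \<one>" "ng_walk G k x n" for n k
    proof (rule ccontr)
      assume "\<not> k > 3"
      hence "enat k \<le> 3" by (simp add: numeral_eq_enat)
      moreover have "ng_dist_set G x N \<le> enat k" using ng_dist_set_le that by metis
      ultimately show False using h by (meson le_less_trans less_le_not_le)
    qed
    have A: "odd (card (centralizer G y))"
    proof
      assume ev: "even (card (centralizer G y))"
      have sC: "subgroup (centralizer G y) G" using centralizer_subgroup[OF yc] .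
      have "finite (centralizer G y)" using fin unfolding centralizer_def by simp
      then obtain t where t: "t \<in> centralizer G y" "ord t = 2"
        using even_subgroup_involution[OF sC _ ev] by blast
      have tc: "t \<in> carrier G" and ty: "t \<otimes> y = y \<otimes> t" using t unfolding centralizer_def by auto
      have t1: "t \<noteq> \<one>" using ord_2D[OF tc t(2)] by simp
      obtain n k3 where n: "n \<in> N" "n \<noteq> \<one>" "k3 \<le> 1" "ng_walk G k3 t n"
        using inv_near[OF tc t(2)] by blast
      obtain k1 where k1: "k1 \<le> 1" "ng_walk G k1 x y" using commute_walk[OF xc yc x1 y1 xy] by blast
      obtain k2 where k2: "k2 \<le> 1" "ng_walk G k2 y t" using commute_walk[OF yc tc y1 t1 ty[symmetric]] by blast
      have "ng_walk G (k1 + k2 + k3) x n" using ng_walk_cat[OF ng_walk_cat[OF k1(2) k2(2)] n(4)] .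
      hence "k1 + k2 + k3 > 3" using far n by blast
      thus False using k1 k2 n by linarith
    qed
    have B: "odd (ord x)"
    proof
      assume ev: "even (ord x)"
      have o1: "ord x \<ge> 1" using ord_ge_1[OF fin xc] .
      then obtain h where hh: "ord x = 2 * h" "h \<ge> 1" using ev by (auto elim!: evenE)
      define t where "t = x [^] h"
      have tc: "t \<in> carrier G" unfolding t_def using xc by simp
      have "ord t = ord x div h" unfolding t_def using ord_pow[OF xc, of h] hh by simp
      hence ot: "ord t = 2" using hh by simp
      have "t = x [^] (int h)" unfolding t_def by (simp add: int_pow_int)
      hence ty: "t \<in> cyc G x" unfolding cyc_def using generate_pow[OF xc] by blast
      have xt: "x \<otimes> t = t \<otimes> x" using cyc_commute[OF xc ty] by simp
      have t1: "t \<noteq> \<one>" using ord_2D[OF tc ot] by simp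
      obtain n k3 where n: "n \<in> N" "n \<noteq> \<one>" "k3 \<le> 1" "ng_walk G k3 t n"
        using inv_near[OF tc ot] by blast
      obtain k1 where k1: "k1 \<le> 1" "ng_walk G k1 x t" using commute_walk[OF xc tc x1 t1 xt] by blast
      have "ng_walk G (k1 + k3) x n" using ng_walk_cat[OF k1(2) n(4)] .
      hence "k1 + k3 > 3" using far n by blast
      thus False using k1 n by linarith
    qed
    show "odd (card (centralizer G y)) \<and> odd (ord x)" using A B by blast
  qed
  show ?thesis using P1 P2 by blast
qed

end
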